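(* Let $\Theta\subseteq\mathcal B_R^d(0)$ with $0\in\Theta$, suppose Assumptions 1 and 2 hold with constants $L,B>0$, and let $g:\Theta\times\mathcal Z\to\Theta$ be such that $g(\cdot\,;z)$ is $\gamma$-contractive on $\Theta$ for every $z\in\mathcal Z$, for some $\gamma\in(0,1)$. Let $T:=\max\left\{\left\lceil\frac{\log(2LRn)}{\log(1/\gamma)}\right\rceil,0\right\}$. Then for any fixed $\theta^{(0)}\in\Theta$, $t\ge0$ and $i_1,\dots,i_t\in[n]$, the iterate $\theta^{(t)}:=g_{i_t}\circ\cdots\circ g_{i_1}(\theta^{(0)})$ satisfies $$\left|\mathbb E_{z_1,\dots,z_n}\big[\hat F(\theta^{(t)})-F(\theta^{(t)})\big]\right|\le\frac{BT+1}{n}.$$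
   Context: $z_1,\dots,z_n$ i.i.d. from a distribution $\mu$ on $\mathcal Z$, $Z\sim\mu$; $f:\Theta\times\mathcal Z\to\mathbb R$, $F(\theta):=\mathbb E_Z[f(\theta;Z)]$, $\hat F(\theta):=\frac1n\sum_{i=1}^nf(\theta;z_i)$; $g_i:=g(\cdot\,;z_i)$. $\gamma$-contractive: $\|g(\theta;z)-g(\theta';z)\|\le\gamma\|\theta-\theta'\|$. Assumption 1 (constant $L$): there is $h_0:\Theta\to\mathbb R$ with $|f(\theta;z)-h_0(\theta)-(f(\theta';z)-h_0(\theta'))|\le L\|\theta-\theta'\|$ for all $\theta,\theta'\in\Theta$, $z$. Assumption 2 (constant $B$): $\sup_zf(\theta;z)-\inf_zf(\theta;z)\le B$ for all $\theta\in\Theta$. *)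

theory Defs
  imports "HOL-Probability.Probability"
begin

text \<open>The iterate theta_t = g_{i_t} o ... o g_{i_1} (theta_0), where the sample is
  omega :: nat => 'b (omega i = z_i) and the index sequence is the list is = [i_1,...,i_t].\<close>
definition iterate :: "('a \<Rightarrow> 'b \<Rightarrow> 'a) \<Rightarrow> 'a \<Rightarrow> nat list \<Rightarrow> (nat \<Rightarrow> 'b) \<Rightarrow> 'a" where
  "iterate g \<theta>0 is \<omega> = foldl (\<lambda>\<theta> i. g \<theta> (\<omega> i)) \<theta>0 is"

definition pop_risk :: "'b measure \<Rightarrow> ('a \<Rightarrow> 'b \<Rightarrow> real) \<Rightarrow> 'a \<Rightarrow> real" where
  "pop_risk M f \<theta> = (\<integral>z. f \<theta> z \<partial>M)"

definition emp_risk :: "nat \<Rightarrow> ('a \<Rightarrow> 'b \<Rightarrow> real) \<Rightarrow> (nat \<Rightarrow> 'b) \<Rightarrow> 'a \<Rightarrow> real" where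
  "emp_risk n f \<omega> \<theta> = (\<Sum>i<n. f \<theta> (\<omega> i)) / real n"

end

theory Submission
  imports Defs
begin

lemma abs_int_le:
  fixes h :: "'c \<Rightarrow> real"
  assumes "prob_space N" "h \<in> borel_measurable N" "\<forall>x\<in>space N. \<bar>h x\<bar> \<le> c"
  shows "\<bar>\<integral>x. h x \<partial>N\<bar> \<le> c"
proof -
  interpret prob_space N by fact
  have int: "integrable N h"
    using assms by (intro integrable_const_bound[where B=c]) auto
  have "(\<integral>x. h x \<partial>N) \<le> c"
    using assms int by (intro integral_le_const AE_I2) (auto simp: abs_le_iff)
  moreover have "-c \<le> (\<integral>x. h x \<partial>N)"
    using assms int by (intro integral_ge_const AE_I2) (auto simp: abs_le_iff)
  ultimately show ?thesis by auto
qed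

lemma int_bound_integrable:
  fixes h :: "'c \<Rightarrow> real"
  assumes "prob_space N" "h \<in> borel_measurable N" "\<forall>x\<in>space N. \<bar>h x\<bar> \<le> c"
  shows "integrable N h"
proof -
  interpret prob_space N by fact
  show ?thesis
    using assms by (intro integrable_const_bound[where B=c]) auto
qed

lemma inner_bound:
  fixes M :: "'b measure" and f :: "'a::euclidean_space \<Rightarrow> 'b \<Rightarrow> real"
    and u :: "'b \<Rightarrow> 'a" and h0 :: "'a \<Rightarrow> real"
  assumes prob: "prob_space M"
    and phim: "(\<lambda>(\<theta>, y). f \<theta> y - pop_risk M f \<theta>) \<in> borel_measurable (borel \<Otimes>\<^sub>M M)"
    and um: "u \<in> M \<rightarrow>\<^sub>M borel" and uT: "\<forall>y\<in>space M. u y \<in> \<Theta>"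
    and dist: "\<forall>y\<in>space M. \<forall>z\<in>space M. norm (u y - u z) \<le> \<delta>"
    and phib: "\<forall>\<theta>\<in>\<Theta>. \<forall>y\<in>space M. \<bar>f \<theta> y - pop_risk M f \<theta>\<bar> \<le> B"
    and intf: "\<forall>\<theta>\<in>\<Theta>. integrable M (f \<theta>)"
    and h0: "\<forall>\<theta>\<in>\<Theta>. \<forall>\<theta>'\<in>\<Theta>. \<forall>z\<in>space M.
                  \<bar>f \<theta> z - h0 \<theta> - (f \<theta>' z - h0 \<theta>')\<bar> \<le> L * norm (\<theta> - \<theta>')"
    and Lnn: "L \<ge> 0"
  shows "\<bar>\<integral>y. f (u y) y - pop_risk M f (u y) \<partial>M\<bar> \<le> L * \<delta>"
proof -
  interpret prob_space M by fact
  interpret pair_sigma_finite M M by unfold_locales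
  have PP: "prob_space (M \<Otimes>\<^sub>M M)" by (rule prob_space_pair[OF prob prob])
  define \<phi> where "\<phi> \<theta> y = f \<theta> y - pop_risk M f \<theta>" for \<theta> y
  have phim': "(\<lambda>p. \<phi> (fst p) (snd p)) \<in> borel_measurable (borel \<Otimes>\<^sub>M M)"
    using phim unfolding \<phi>_def by (simp add: case_prod_beta')
  have m1: "(\<lambda>p. \<phi> (u (fst p)) (fst p)) \<in> borel_measurable (M \<Otimes>\<^sub>M M)"
  proof -
    have "(\<lambda>p. (u (fst p), fst p)) \<in> (M \<Otimes>\<^sub>M M) \<rightarrow>\<^sub>M (borel \<Otimes>\<^sub>M M)"
      using um by measurable
    from measurable_compose[OF this phim'] show ?thesis by simp
  qed
  have m2: "(\<lambda>p. \<phi> (u (snd p)) (fst p)) \<in> borel_measurable (M \<Otimes>\<^sub>M M)"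
  proof -
    have "(\<lambda>p. (u (snd p), fst p)) \<in> (M \<Otimes>\<^sub>M M) \<rightarrow>\<^sub>M (borel \<Otimes>\<^sub>M M)"
      using um by measurable
    from measurable_compose[OF this phim'] show ?thesis by simp
  qed
  have sp: "\<And>p. p \<in> space (M \<Otimes>\<^sub>M M) \<Longrightarrow> fst p \<in> space M \<and> snd p \<in> space M"
    by (auto simp: space_pair_measure)
  have i1: "integrable (M \<Otimes>\<^sub>M M) (\<lambda>p. \<phi> (u (fst p)) (fst p))"
    using m1 PP phib uT sp unfolding \<phi>_def by (intro int_bound_integrable[where c=B]) auto
  have i2: "integrable (M \<Otimes>\<^sub>M M) (\<lambda>p. \<phi> (u (snd p)) (fst p))"
    using m2 PP phib uT sp unfolding \<phi>_def by (intro int_bound_integrable[where c=B]) auto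
  define a where "a p = \<phi> (u (fst p)) (fst p) - \<phi> (u (snd p)) (fst p)" for p
  have am: "a \<in> borel_measurable (M \<Otimes>\<^sub>M M)" unfolding a_def using m1 m2 by measurable
  have J: "integral\<^sup>L (M \<Otimes>\<^sub>M M) a
      = integral\<^sup>L (M \<Otimes>\<^sub>M M) (\<lambda>p. \<phi> (u (fst p)) (fst p)) - integral\<^sup>L (M \<Otimes>\<^sub>M M) (\<lambda>p. \<phi> (u (snd p)) (fst p))"
    unfolding a_def using i1 i2 by (rule Bochner_Integration.integral_diff)
  have J1: "integral\<^sup>L (M \<Otimes>\<^sub>M M) (\<lambda>p. \<phi> (u (fst p)) (fst p)) = (\<integral>y. \<phi> (u y) y \<partial>M)"
    using integral_fst'[OF i1, symmetric] by (simp add: prob_space)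
  have J2: "integral\<^sup>L (M \<Otimes>\<^sub>M M) (\<lambda>p. \<phi> (u (snd p)) (fst p)) = 0"
  proof -
    have "integral\<^sup>L (M \<Otimes>\<^sub>M M) (\<lambda>p. \<phi> (u (snd p)) (fst p))
        = (\<integral>z. (\<integral>y. \<phi> (u z) y \<partial>M) \<partial>M)"
      using integral_snd[of "\<lambda>y z. \<phi> (u z) y"] i2 by (simp add: case_prod_beta')
    also have "\<dots> = (\<integral>z. 0 \<partial>M)"
    proof (rule Bochner_Integration.integral_cong[OF refl])
      fix z assume z: "z \<in> space M"
      have "(\<integral>y. \<phi> (u z) y \<partial>M) = (\<integral>y. f (u z) y \<partial>M) - (\<integral>y. pop_risk M f (u z) \<partial>M)"
        unfolding \<phi>_def using intf uT z by (intro Bochner_Integration.integral_diff) auto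
      also have "\<dots> = 0" by (simp add: prob_space pop_risk_def)
      finally show "(\<integral>y. \<phi> (u z) y \<partial>M) = 0" .
    qed
    finally show ?thesis by simp
  qed
  have swap: "(\<integral>p. a (snd p, fst p) \<partial>(M \<Otimes>\<^sub>M M)) = integral\<^sup>L (M \<Otimes>\<^sub>M M) a"
    using integral_product_swap[OF am] by (simp add: case_prod_beta')
  have ia: "integrable (M \<Otimes>\<^sub>M M) a" unfolding a_def using i1 i2 by auto
  have ias: "integrable (M \<Otimes>\<^sub>M M) (\<lambda>p. a (snd p, fst p))"
  proof -
    have "(\<lambda>p. (snd p, fst p)) \<in> (M \<Otimes>\<^sub>M M) \<rightarrow>\<^sub>M (M \<Otimes>\<^sub>M M)" by measurable
    from measurable_compose[OF this am] have "(\<lambda>p. a (snd p, fst p)) \<in> borel_measurable (M \<Otimes>\<^sub>M M)" .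
    moreover have "\<forall>p\<in>space (M \<Otimes>\<^sub>M M). \<bar>a (snd p, fst p)\<bar> \<le> 2*B"
    proof
      fix p assume "p \<in> space (M \<Otimes>\<^sub>M M)"
      then have "fst p \<in> space M" "snd p \<in> space M" using sp by auto
      then show "\<bar>a (snd p, fst p)\<bar> \<le> 2*B"
        using phib uT unfolding a_def \<phi>_def
        by (smt (verit, best) fst_conv snd_conv)
    qed
    ultimately show ?thesis using PP by (intro int_bound_integrable[where c="2*B"]) auto
  qed
  have sum: "integral\<^sup>L (M \<Otimes>\<^sub>M M) (\<lambda>p. a p + a (snd p, fst p)) = 2 * integral\<^sup>L (M \<Otimes>\<^sub>M M) a"
    using Bochner_Integration.integral_add[OF ia ias] swap by simp
  have bnd: "\<bar>integral\<^sup>L (M \<Otimes>\<^sub>M M) (\<lambda>p. a p + a (snd p, fst p))\<bar> \<le> 2 * (L * \<delta>)"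
  proof (rule abs_int_le[OF PP])
    show "(\<lambda>p. a p + a (snd p, fst p)) \<in> borel_measurable (M \<Otimes>\<^sub>M M)"
      using ia ias by auto
    show "\<forall>p\<in>space (M \<Otimes>\<^sub>M M). \<bar>a p + a (snd p, fst p)\<bar> \<le> 2 * (L * \<delta>)"
    proof
      fix p assume "p \<in> space (M \<Otimes>\<^sub>M M)"
      then have y: "fst p \<in> space M" and z: "snd p \<in> space M" using sp by auto
      define y' where "y' = fst p"
      define z' where "z' = snd p"
      have e: "a p + a (snd p, fst p) = (f (u y') y' - h0 (u y') - (f (u z') y' - h0 (u z')))
              + (f (u z') z' - h0 (u z') - (f (u y') z' - h0 (u y')))"
        unfolding a_def \<phi>_def y'_def z'_def by simp
      have b1: "\<bar>f (u y') y' - h0 (u y') - (f (u z') y' - h0 (u z'))\<bar> \<le> L * \<delta>"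
        using h0 uT y z dist Lnn unfolding y'_def z'_def
        by (meson mult_left_mono order_trans)
      have b2: "\<bar>f (u z') z' - h0 (u z') - (f (u y') z' - h0 (u y'))\<bar> \<le> L * \<delta>"
        using h0 uT y z dist Lnn unfolding y'_def z'_def
        by (meson mult_left_mono order_trans)
      show "\<bar>a p + a (snd p, fst p)\<bar> \<le> 2 * (L * \<delta>)" using e b1 b2 by linarith
    qed
  qed
  have "(\<integral>y. \<phi> (u y) y \<partial>M) = integral\<^sup>L (M \<Otimes>\<^sub>M M) a" using J J1 J2 by simp
  then show ?thesis using sum bnd unfolding \<phi>_def by simp
qed


lemma abs_int_le0:
  fixes h :: "'c \<Rightarrow> real"
  assumes "prob_space N" "\<forall>x\<in>space N. \<bar>h x\<bar> \<le> c" "c \<ge> 0"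
  shows "\<bar>\<integral>x. h x \<partial>N\<bar> \<le> c"
proof (cases "integrable N h")
  case True
  interpret prob_space N by fact
  have "(\<integral>x. h x \<partial>N) \<le> c"
    using assms True by (intro integral_le_const AE_I2) (auto simp: abs_le_iff)
  moreover have "-c \<le> (\<integral>x. h x \<partial>N)"
    using assms True by (intro integral_ge_const AE_I2) (auto simp: abs_le_iff)
  ultimately show ?thesis by auto
next
  case False
  then show ?thesis using assms by (simp add: not_integrable_integral_eq)
qed

lemma foldl_in:
  assumes "\<forall>\<theta>\<in>\<Theta>. \<forall>z\<in>S. g \<theta> z \<in> \<Theta>"
  shows "a \<in> \<Theta> \<Longrightarrow> \<forall>j\<in>set xs. \<omega> j \<in> S \<Longrightarrow> foldl (\<lambda>\<theta> i. g \<theta> (\<omega> i)) a xs \<in> \<Theta>"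
  using assms by (induction xs arbitrary: a) auto

lemma foldl_contr:
  fixes g :: "'a::real_normed_vector \<Rightarrow> 'b \<Rightarrow> 'a"
  assumes maps: "\<forall>\<theta>\<in>\<Theta>. \<forall>z\<in>S. g \<theta> z \<in> \<Theta>"
    and contr: "\<forall>z\<in>S. \<forall>\<theta>\<in>\<Theta>. \<forall>\<theta>'\<in>\<Theta>. norm (g \<theta> z - g \<theta>' z) \<le> \<gamma> * norm (\<theta> - \<theta>')"
    and gam: "\<gamma> \<ge> 0"
  shows "a \<in> \<Theta> \<Longrightarrow> b \<in> \<Theta> \<Longrightarrow> \<forall>j\<in>set xs. \<omega> j \<in> S \<and> \<omega>' j = \<omega> j \<Longrightarrow>
    norm (foldl (\<lambda>\<theta> i. g \<theta> (\<omega> i)) a xs - foldl (\<lambda>\<theta> i. g \<theta> (\<omega>' i)) b xs) \<le> \<gamma> ^ length xs * norm (a - b)"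
proof (induction xs arbitrary: a b)
  case Nil
  then show ?case by simp
next
  case (Cons j xs)
  have ga: "g a (\<omega> j) \<in> \<Theta>" "g b (\<omega> j) \<in> \<Theta>" using Cons.prems maps by auto
  have "norm (foldl (\<lambda>\<theta> i. g \<theta> (\<omega> i)) (g a (\<omega> j)) xs - foldl (\<lambda>\<theta> i. g \<theta> (\<omega>' i)) (g b (\<omega> j)) xs)
      \<le> \<gamma> ^ length xs * norm (g a (\<omega> j) - g b (\<omega> j))"
    using Cons.IH[OF ga] Cons.prems by auto
  also have "\<dots> \<le> \<gamma> ^ length xs * (\<gamma> * norm (a - b))"
    using contr Cons.prems gam by (intro mult_left_mono) auto
  finally show ?case using Cons.prems by (simp add: mult.assoc mult.commute mult.left_commute)
qed

lemma iter_dist: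
  fixes g :: "'a::real_normed_vector \<Rightarrow> 'b \<Rightarrow> 'a"
  assumes maps: "\<forall>\<theta>\<in>\<Theta>. \<forall>z\<in>S. g \<theta> z \<in> \<Theta>"
    and contr: "\<forall>z\<in>S. \<forall>\<theta>\<in>\<Theta>. \<forall>\<theta>'\<in>\<Theta>. norm (g \<theta> z - g \<theta>' z) \<le> \<gamma> * norm (\<theta> - \<theta>')"
    and gam: "\<gamma> \<ge> 0" "\<gamma> \<le> 1"
    and ball: "\<Theta> \<subseteq> cball 0 R" and R: "R \<ge> 0"
    and t0: "\<theta>0 \<in> \<Theta>"
    and w: "\<forall>j\<in>set is. \<omega> j \<in> S" "\<forall>j\<in>set is. \<omega>' j \<in> S"
    and agree: "\<forall>j. j \<noteq> i \<longrightarrow> \<omega>' j = \<omega> j"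
    and notin: "i \<notin> set (drop (length is - T) is)"
  shows "norm (iterate g \<theta>0 is \<omega> - iterate g \<theta>0 is \<omega>') \<le> \<gamma> ^ T * (2 * R)"
proof -
  define k where "k = length is - T"
  define a where "a = foldl (\<lambda>\<theta> i. g \<theta> (\<omega> i)) \<theta>0 (take k is)"
  define b where "b = foldl (\<lambda>\<theta> i. g \<theta> (\<omega>' i)) \<theta>0 (take k is)"
  have wt: "\<forall>j\<in>set (take k is). \<omega> j \<in> S" "\<forall>j\<in>set (take k is). \<omega>' j \<in> S"
    using w by (auto dest: in_set_takeD)
  have aT: "a \<in> \<Theta>" unfolding a_def using foldl_in[OF maps t0 wt(1)] .
  have bT: "b \<in> \<Theta>" unfolding b_def using foldl_in[OF maps t0 wt(2)] .
  have split: "is = take k is @ drop k is" by simp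
  have eq1: "iterate g \<theta>0 is \<omega> = foldl (\<lambda>\<theta> i. g \<theta> (\<omega> i)) a (drop k is)"
    unfolding iterate_def a_def by (subst split) (simp only: foldl_append)
  have eq2: "iterate g \<theta>0 is \<omega>' = foldl (\<lambda>\<theta> i. g \<theta> (\<omega>' i)) b (drop k is)"
    unfolding iterate_def b_def by (subst split) (simp only: foldl_append)
  have wd: "\<forall>j\<in>set (drop k is). \<omega> j \<in> S \<and> \<omega>' j = \<omega> j"
    using w agree notin unfolding k_def by (metis in_set_dropD)
  have main: "norm (iterate g \<theta>0 is \<omega> - iterate g \<theta>0 is \<omega>') \<le> \<gamma> ^ length (drop k is) * norm (a - b)"
    unfolding eq1 eq2 using foldl_contr[OF maps contr gam(1) aT bT wd] .
  have nab: "norm (a - b) \<le> 2 * R"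
  proof -
    have "norm a \<le> R" "norm b \<le> R" using aT bT ball by auto
    then show ?thesis using norm_triangle_ineq4[of a b] by linarith
  qed
  show ?thesis
  proof (cases "length is \<ge> T")
    case True
    then have "length (drop k is) = T" unfolding k_def by simp
    then show ?thesis using main nab gam by (metis mult_left_mono order_trans zero_le_power)
  next
    case False
    then have "k = 0" unfolding k_def by simp
    then have "a = b" unfolding a_def b_def by simp
    then show ?thesis using main gam R by simp
  qed
qed

lemma iterate_meas:
  assumes g_meas: "(\<lambda>(\<theta>, z). g \<theta> z) \<in> (borel \<Otimes>\<^sub>M M) \<rightarrow>\<^sub>M borel"
  shows "set xs \<subseteq> {..<n} \<Longrightarrow> (\<lambda>\<omega>. iterate g \<theta>0 xs \<omega>) \<in> PiM {..<n} (\<lambda>_. M) \<rightarrow>\<^sub>M borel"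
proof (induction xs rule: rev_induct)
  case Nil
  then show ?case by (simp add: iterate_def)
next
  case (snoc j xs)
  have j: "j \<in> {..<n}" using snoc.prems by auto
  have m: "(\<lambda>\<omega>. (iterate g \<theta>0 xs \<omega>, \<omega> j)) \<in> PiM {..<n} (\<lambda>_. M) \<rightarrow>\<^sub>M (borel \<Otimes>\<^sub>M M)"
    using snoc.IH snoc.prems measurable_component_singleton[OF j, of "\<lambda>_. M"]
    by (intro measurable_Pair) auto
  have eq: "(\<lambda>\<omega>. iterate g \<theta>0 (xs @ [j]) \<omega>) = (\<lambda>(\<theta>, z). g \<theta> z) \<circ> (\<lambda>\<omega>. (iterate g \<theta>0 xs \<omega>, \<omega> j))"
    by (auto simp: iterate_def)
  show ?case by (subst eq) (rule measurable_comp[OF m g_meas])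
qed

lemma T_bound:
  fixes L R \<gamma> :: real and n :: nat
  assumes "L > 0" "R \<ge> 0" "0 < \<gamma>" "\<gamma> < 1" "n \<ge> 1"
  shows "L * (\<gamma> ^ nat (max \<lceil>ln (2 * L * R * real n) / ln (1 / \<gamma>)\<rceil> 0) * (2 * R)) \<le> 1 / real n"
proof (cases "R = 0")
  case True
  then show ?thesis by simp
next
  case False
  then have Rp: "R > 0" using assms by simp
  define c where "c = ln (2 * L * R * real n) / ln (1 / \<gamma>)"
  define T where "T = nat (max \<lceil>c\<rceil> 0)"
  have Tc: "real T \<ge> c" unfolding T_def
    by (metis le_of_int_ceiling max.cobounded1 nat_0_le of_int_le_iff of_nat_nat order.trans max.cobounded2)
  have lg: "ln (1 / \<gamma>) > 0" using assms by simp
  have lg2: "ln (1/\<gamma>) = - ln \<gamma>" using assms by (simp add: ln_div)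
  have pos: "2 * L * R * real n > 0" using assms Rp by simp
  have "\<gamma> ^ T = \<gamma> powr real T" using assms by (simp add: powr_realpow)
  also have "\<dots> \<le> \<gamma> powr c" using assms Tc by (intro powr_mono') auto
  also have "\<gamma> powr c = exp (c * ln \<gamma>)" using assms by (simp add: powr_def)
  also have "c * ln \<gamma> = - ln (2 * L * R * real n)" unfolding c_def lg2 using lg lg2 by (simp add: field_simps)
  also have "exp (- ln (2 * L * R * real n)) = 1 / (2 * L * R * real n)"
    using pos by (simp add: exp_minus field_simps)
  finally have "\<gamma> ^ T \<le> 1 / (2 * L * R * real n)" .
  then have "L * (\<gamma> ^ T * (2 * R)) \<le> L * (1 / (2 * L * R * real n) * (2 * R))"
    using assms Rp by (intro mult_left_mono mult_right_mono) auto
  also have "\<dots> = 1 / real n" using assms Rp by (simp add: field_simps)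
  finally show ?thesis unfolding T_def c_def .
qed


theorem theorem8:
  fixes M :: "'b measure" and f :: "'a::euclidean_space \<Rightarrow> 'b \<Rightarrow> real"
    and g :: "'a \<Rightarrow> 'b \<Rightarrow> 'a" and \<Theta> :: "'a set"
    and R L B \<gamma> :: real and n :: nat and \<theta>0 :: 'a and "is" :: "nat list"
  assumes prob: "prob_space M"
    and n_pos: "n \<ge> 1"
    and Theta_ball: "\<Theta> \<subseteq> cball 0 R" and zero_in: "0 \<in> \<Theta>"
    and L_pos: "L > 0" and B_pos: "B > 0"
    and assm1: "\<exists>h0 :: 'a \<Rightarrow> real. \<forall>\<theta>\<in>\<Theta>. \<forall>\<theta>'\<in>\<Theta>. \<forall>z\<in>space M.
                  \<bar>f \<theta> z - h0 \<theta> - (f \<theta>' z - h0 \<theta>')\<bar> \<le> L * norm (\<theta> - \<theta>')"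
    and assm2: "\<forall>\<theta>\<in>\<Theta>. \<forall>z\<in>space M. \<forall>z'\<in>space M. f \<theta> z - f \<theta> z' \<le> B"
    and g_maps: "\<forall>\<theta>\<in>\<Theta>. \<forall>z\<in>space M. g \<theta> z \<in> \<Theta>"
    and gamma: "0 < \<gamma>" "\<gamma> < 1"
    and contr: "\<forall>z\<in>space M. \<forall>\<theta>\<in>\<Theta>. \<forall>\<theta>'\<in>\<Theta>. norm (g \<theta> z - g \<theta>' z) \<le> \<gamma> * norm (\<theta> - \<theta>')"
    and f_meas: "(\<lambda>(\<theta>, z). f \<theta> z) \<in> borel_measurable (borel \<Otimes>\<^sub>M M)"
    and g_meas: "(\<lambda>(\<theta>, z). g \<theta> z) \<in> (borel \<Otimes>\<^sub>M M) \<rightarrow>\<^sub>M borel"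
    and theta0: "\<theta>0 \<in> \<Theta>"
    and idx: "set is \<subseteq> {..<n}"
  shows "\<bar>\<integral>\<omega>. emp_risk n f \<omega> (iterate g \<theta>0 is \<omega>) - pop_risk M f (iterate g \<theta>0 is \<omega>)
            \<partial>(PiM {..<n} (\<lambda>_. M))\<bar>
         \<le> (B * real_of_int (max \<lceil>ln (2 * L * R * real n) / ln (1 / \<gamma>)\<rceil> 0) + 1) / real n"
proof -
  interpret prob_space M by fact
  obtain h0 :: "'a \<Rightarrow> real" where h0: "\<forall>\<theta>\<in>\<Theta>. \<forall>\<theta>'\<in>\<Theta>. \<forall>z\<in>space M.
                  \<bar>f \<theta> z - h0 \<theta> - (f \<theta>' z - h0 \<theta>')\<bar> \<le> L * norm (\<theta> - \<theta>')" using assm1 by blast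
  define P where "P = PiM {..<n} (\<lambda>_. M)"
  have PP: "prob_space P" unfolding P_def by (intro prob_space_PiM) (simp add: prob)
  have R0: "R \<ge> 0" using zero_in Theta_ball by auto
  define th where "th \<omega> = iterate g \<theta>0 is \<omega>" for \<omega>
  have thM: "th \<in> P \<rightarrow>\<^sub>M borel"
    unfolding th_def P_def using iterate_meas[OF g_meas idx] by simp
  have spP: "\<And>\<omega> j. \<omega> \<in> space P \<Longrightarrow> j < n \<Longrightarrow> \<omega> j \<in> space M"
    unfolding P_def by (auto simp: space_PiM PiE_iff)
  have thT: "\<And>\<omega>. \<omega> \<in> space P \<Longrightarrow> th \<omega> \<in> \<Theta>"
    unfolding th_def iterate_def using idx spP
    by (intro foldl_in[OF g_maps theta0]) auto
  have f_meas': "(\<lambda>p. f (fst p) (snd p)) \<in> borel_measurable (borel \<Otimes>\<^sub>M M)"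
    using f_meas by (simp add: case_prod_beta')
  have fm: "\<And>\<theta>. f \<theta> \<in> borel_measurable M"
  proof -
    fix \<theta> :: 'a
    have "(\<lambda>z. (\<theta>, z)) \<in> M \<rightarrow>\<^sub>M (borel \<Otimes>\<^sub>M M)" by measurable
    from measurable_compose[OF this f_meas'] show "f \<theta> \<in> borel_measurable M" by simp
  qed
  obtain z0 where z0: "z0 \<in> space M" using not_empty by blast
  have intf: "\<forall>\<theta>\<in>\<Theta>. integrable M (f \<theta>)"
  proof
    fix \<theta> assume t: "\<theta> \<in> \<Theta>"
    show "integrable M (f \<theta>)"
    proof (rule int_bound_integrable[OF prob fm, where c="\<bar>f \<theta> z0\<bar> + B"])
      show "\<forall>x\<in>space M. \<bar>f \<theta> x\<bar> \<le> \<bar>f \<theta> z0\<bar> + B"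
        using assm2 t z0 by (smt (verit))
    qed
  qed
  have Fm: "pop_risk M f \<in> borel_measurable borel"
  proof -
    have "(\<lambda>x. \<integral>y. f x y \<partial>M) \<in> borel_measurable borel"
      using f_meas by (intro borel_measurable_lebesgue_integral) (simp add: case_prod_beta')
    then show ?thesis unfolding pop_risk_def[abs_def] by simp
  qed
  have phim: "(\<lambda>(\<theta>, y). f \<theta> y - pop_risk M f \<theta>) \<in> borel_measurable (borel \<Otimes>\<^sub>M M)"
  proof -
    have "(\<lambda>p. pop_risk M f (fst p)) \<in> borel_measurable (borel \<Otimes>\<^sub>M M)"
      using measurable_compose[OF measurable_fst[of borel M] Fm] by simp
    then have "(\<lambda>p. f (fst p) (snd p) - pop_risk M f (fst p)) \<in> borel_measurable (borel \<Otimes>\<^sub>M M)"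
      using f_meas' by (intro borel_measurable_diff)
    then show ?thesis by (simp add: case_prod_beta')
  qed
  have phib: "\<forall>\<theta>\<in>\<Theta>. \<forall>y\<in>space M. \<bar>f \<theta> y - pop_risk M f \<theta>\<bar> \<le> B"
  proof (intro ballI)
    fix \<theta> y assume t: "\<theta> \<in> \<Theta>" and y: "y \<in> space M"
    have "(\<integral>z. f \<theta> y - f \<theta> z \<partial>M) = (\<integral>z. f \<theta> y \<partial>M) - (\<integral>z. f \<theta> z \<partial>M)"
      using intf t by (intro Bochner_Integration.integral_diff) auto
    also have "\<dots> = f \<theta> y - pop_risk M f \<theta>" by (simp add: prob_space pop_risk_def)
    finally have eq: "f \<theta> y - pop_risk M f \<theta> = (\<integral>z. f \<theta> y - f \<theta> z \<partial>M)" by simp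
    show "\<bar>f \<theta> y - pop_risk M f \<theta>\<bar> \<le> B"
      unfolding eq using assm2 t y B_pos
      by (intro abs_int_le0[OF prob]) (auto simp: abs_le_iff)
  qed
  define d where "d i \<omega> = f (th \<omega>) (\<omega> i) - pop_risk M f (th \<omega>)" for i \<omega>
  have dm: "\<And>i. i < n \<Longrightarrow> d i \<in> borel_measurable P"
  proof -
    fix i assume i: "i < n"
    have "(\<lambda>\<omega>. (th \<omega>, \<omega> i)) \<in> P \<rightarrow>\<^sub>M (borel \<Otimes>\<^sub>M M)"
      using thM measurable_component_singleton[of i "{..<n}" "\<lambda>_. M"] i unfolding P_def
      by (intro measurable_Pair) auto
    from measurable_compose[OF this phim] show "d i \<in> borel_measurable P"
      unfolding d_def[abs_def] by simp
  qed
  have db: "\<And>i \<omega>. i < n \<Longrightarrow> \<omega> \<in> space P \<Longrightarrow> \<bar>d i \<omega>\<bar> \<le> B"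
    unfolding d_def using phib thT spP by blast
  have dint: "\<And>i. i < n \<Longrightarrow> integrable P (d i)"
    using dm db PP by (intro int_bound_integrable[where c=B]) auto
  have decomp: "\<And>\<omega>. emp_risk n f \<omega> (iterate g \<theta>0 is \<omega>) - pop_risk M f (iterate g \<theta>0 is \<omega>)
      = (\<Sum>i<n. d i \<omega>) / real n"
    using n_pos unfolding emp_risk_def d_def th_def
    by (simp add: sum_subtractf field_simps)
  have int_eq: "(\<integral>\<omega>. emp_risk n f \<omega> (iterate g \<theta>0 is \<omega>) - pop_risk M f (iterate g \<theta>0 is \<omega>) \<partial>P)
      = (\<Sum>i<n. integral\<^sup>L P (d i)) / real n"
    unfolding decomp using dint by (simp add: Bochner_Integration.integral_sum)
  define Tn where "Tn = nat (max \<lceil>ln (2 * L * R * real n) / ln (1 / \<gamma>)\<rceil> 0)"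
  have Tn_eq: "real_of_int (max \<lceil>ln (2 * L * R * real n) / ln (1 / \<gamma>)\<rceil> 0) = real Tn"
    unfolding Tn_def by simp
  define \<delta> where "\<delta> = \<gamma> ^ Tn * (2 * R)"
  have Ld: "L * \<delta> \<le> 1 / real n"
    unfolding \<delta>_def Tn_def using T_bound[OF L_pos R0 gamma n_pos] .
  define D where "D = set (drop (length is - Tn) is)"
  have bd1: "\<And>i. i < n \<Longrightarrow> \<bar>integral\<^sup>L P (d i)\<bar> \<le> B"
    using db PP B_pos by (intro abs_int_le0) auto
  have bd2: "\<And>i. i < n \<Longrightarrow> i \<notin> D \<Longrightarrow> \<bar>integral\<^sup>L P (d i)\<bar> \<le> L * \<delta>"
  proof -
    fix i assume i: "i < n" and iD: "i \<notin> D"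
    define I where "I = {..<n} - {i}"
    have ins: "insert i I = {..<n}" unfolding I_def using i by auto
    have iI: "i \<notin> I" "finite I" unfolding I_def by auto
    interpret PS: product_sigma_finite "\<lambda>_::nat. M"
      by (simp add: product_sigma_finite_def prob_space_imp_sigma_finite prob)
    have "integral\<^sup>L P (d i) = (\<integral>x. (\<integral>y. d i (x(i:=y)) \<partial>M) \<partial>PiM I (\<lambda>_. M))"
      using PS.product_integral_insert[OF iI(2) iI(1), of "d i"] dint[OF i]
      unfolding P_def ins by simp
    also have "\<bar>\<dots>\<bar> \<le> L * \<delta>"
    proof (rule abs_int_le0)
      show "prob_space (PiM I (\<lambda>_. M))" by (intro prob_space_PiM) (simp add: prob)
      show "L * \<delta> \<ge> 0" unfolding \<delta>_def using L_pos R0 gamma by simp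
      show "\<forall>x\<in>space (PiM I (\<lambda>_. M)). \<bar>\<integral>y. d i (x(i:=y)) \<partial>M\<bar> \<le> L * \<delta>"
      proof
        fix x assume x: "x \<in> space (PiM I (\<lambda>_. M))"
        have upd: "(\<lambda>v. x(i := v)) \<in> M \<rightarrow>\<^sub>M P"
          using measurable_component_update[OF x iI(1)] unfolding P_def ins .
        have um: "(\<lambda>y. th (x(i:=y))) \<in> M \<rightarrow>\<^sub>M borel"
          using measurable_compose[OF upd thM] .
        have inP: "\<And>y. y \<in> space M \<Longrightarrow> x(i:=y) \<in> space P"
          using upd by (auto dest: measurable_space)
        have uT: "\<forall>y\<in>space M. th (x(i:=y)) \<in> \<Theta>" using inP thT by blast
        have dist: "\<forall>y\<in>space M. \<forall>z\<in>space M. norm (th (x(i:=y)) - th (x(i:=z))) \<le> \<delta>"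
        proof (intro ballI)
          fix y z assume y: "y \<in> space M" and z: "z \<in> space M"
          show "norm (th (x(i:=y)) - th (x(i:=z))) \<le> \<delta>"
            unfolding th_def \<delta>_def
          proof (rule iter_dist[OF g_maps contr _ _ Theta_ball R0 theta0])
            show "0 \<le> \<gamma>" "\<gamma> \<le> 1" using gamma by auto
            show "\<forall>j\<in>set is. (x(i := y)) j \<in> space M"
              using idx spP[OF inP[OF y]] by (meson lessThan_iff subsetD)
            show "\<forall>j\<in>set is. (x(i := z)) j \<in> space M"
              using idx spP[OF inP[OF z]] by (meson lessThan_iff subsetD)
            show "\<forall>j. j \<noteq> i \<longrightarrow> (x(i := z)) j = (x(i := y)) j" by simp
            show "i \<notin> set (drop (length is - Tn) is)" using iD unfolding D_def .
          qed
        qed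
        have "\<bar>\<integral>y. f (th (x(i:=y))) y - pop_risk M f (th (x(i:=y))) \<partial>M\<bar> \<le> L * \<delta>"
          using inner_bound[OF prob phim um uT dist phib intf h0] L_pos by simp
        then show "\<bar>\<integral>y. d i (x(i:=y)) \<partial>M\<bar> \<le> L * \<delta>" unfolding d_def by simp
      qed
    qed
    finally show "\<bar>integral\<^sup>L P (d i)\<bar> \<le> L * \<delta>" .
  qed
  have "\<bar>\<Sum>i<n. integral\<^sup>L P (d i)\<bar> \<le> (\<Sum>i<n. \<bar>integral\<^sup>L P (d i)\<bar>)" by (rule sum_abs)
  also have "\<dots> \<le> (\<Sum>i<n. (if i \<in> D then B else 0) + 1 / real n)"
  proof (rule sum_mono)
    fix i assume "i \<in> {..<n}"
    then have i: "i < n" by simp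
    show "\<bar>integral\<^sup>L P (d i)\<bar> \<le> (if i \<in> D then B else 0) + 1 / real n"
      proof (cases "i \<in> D")
      case True
      have h: "0 \<le> 1 / real n" by simp
      show ?thesis using bd1[OF i] True h by (smt (verit))
    next
      case False
      then show ?thesis using bd2[OF i False] Ld by simp
    qed
  qed
  also have "\<dots> = B * real (card ({..<n} \<inter> D)) + 1"
    using n_pos by (simp add: sum.distrib sum.inter_restrict[symmetric])
  also have "\<dots> \<le> B * real Tn + 1"
  proof -
    have "card ({..<n} \<inter> D) \<le> card D" unfolding D_def by (intro card_mono) auto
    also have "\<dots> \<le> length (drop (length is - Tn) is)" unfolding D_def by (rule card_length)
    also have "\<dots> \<le> Tn" by simp
    finally show ?thesis using B_pos by simp
  qed
  finally have "\<bar>\<Sum>i<n. integral\<^sup>L P (d i)\<bar> \<le> B * real Tn + 1" .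
  then have "\<bar>(\<Sum>i<n. integral\<^sup>L P (d i)) / real n\<bar> \<le> (B * real Tn + 1) / real n"
    using n_pos by (simp add: divide_right_mono)
  then show ?thesis using int_eq Tn_eq unfolding P_def by simp
qed

end
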